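(* Let $I\subset\mathbb{R}$ be an interval, $\psi:I\to\mathbb{R}$ a non-decreasing convex function, $n\ge2$, and $a=(a_1,\dots,a_n)\in I^n$ a convex sequence (i.e. $(\Delta a_i)_{i=1}^{n-1}$ non-decreasing). Let $p=(p_1,\dots,p_n)\in[0,\infty)^n$ with $P_n=\sum p_i>0$ and $\frac1{P_n}\sum_{i=1}^n p_i i<n$. Set $m=\left\lfloor \frac1{P_n}\sum_{i=1}^n p_i i\right\rfloor$ (ordinary floor) and, for integers $u<v$, $$\Phi(u,v)=\Big(\sum_{i=1}^n\frac{i-u}{v-u}p_i\Big)\psi(a_v)+\Big(\sum_{i=1}^n\frac{v-i}{v-u}p_i\Big)\psi(a_u).$$ Then $$\Phi(m,m+1)\le\sum_{i=1}^n p_i\psi(a_i)\le\Phi(1,n).$$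
   Context: For a real sequence $(x_i)$, $\Delta x_i=x_{i+1}-x_i$. *)

theory Defs
  imports "HOL-Analysis.Analysis"
begin

text \<open>Phi(u,v) for indices u < v; sequences are indexed 1..n as functions nat => real.\<close>
definition Phi :: "nat \<Rightarrow> (nat \<Rightarrow> real) \<Rightarrow> (real \<Rightarrow> real) \<Rightarrow> (nat \<Rightarrow> real) \<Rightarrow> int \<Rightarrow> int \<Rightarrow> real" where
  "Phi n p \<psi> a u v =
     (\<Sum>i=1..n. (real i - real_of_int u) / real_of_int (v - u) * p i) * \<psi> (a (nat v))
   + (\<Sum>i=1..n. (real_of_int v - real i) / real_of_int (v - u) * p i) * \<psi> (a (nat u))"

end

theory Submission
  imports Defs
begin

lemma dmono:
  fixes b :: "nat \<Rightarrow> real"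
  assumes c: "\<And>i. 1 \<le> i \<Longrightarrow> i + 2 \<le> n \<Longrightarrow> b (i+1) - b i \<le> b (i+2) - b (i+1)"
  shows "1 \<le> j \<Longrightarrow> j + k + 1 \<le> n \<Longrightarrow> b (j+1) - b j \<le> b (j+k+1) - b (j+k)"
proof (induction k)
  case 0 then show ?case by simp
next
  case (Suc k)
  then have "b (j+k+1) - b (j+k) \<le> b (j+k+2) - b (j+k+1)" using c[of "j+k"] by simp
  with Suc show ?case by (simp add: add.commute add.left_commute)
qed

lemma dmono':
  fixes b :: "nat \<Rightarrow> real"
  assumes c: "\<And>i. 1 \<le> i \<Longrightarrow> i + 2 \<le> n \<Longrightarrow> b (i+1) - b i \<le> b (i+2) - b (i+1)"
  shows "1 \<le> j \<Longrightarrow> j \<le> j' \<Longrightarrow> j' + 1 \<le> n \<Longrightarrow> b (j+1) - b j \<le> b (j'+1) - b j'"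
  using dmono[OF c, where j=j and k="j'-j"] by simp

lemma line_up:
  fixes b :: "nat \<Rightarrow> real"
  assumes c: "\<And>i. 1 \<le> i \<Longrightarrow> i + 2 \<le> n \<Longrightarrow> b (i+1) - b i \<le> b (i+2) - b (i+1)"
    and k: "1 \<le> k" "k + 1 \<le> n"
  shows "k + d \<le> n \<Longrightarrow> b k + (real (k+d) - real k) * (b (k+1) - b k) \<le> b (k+d)"
proof (induction d)
  case 0 then show ?case by simp
next
  case (Suc d)
  have "b (k+1) - b k \<le> b (k+d+1) - b (k+d)" using dmono'[OF c, where j=k and j'="k+d"] k Suc.prems by simp
  with Suc show ?case by (simp add: algebra_simps)
qed

lemma line_down:
  fixes b :: "nat \<Rightarrow> real"
  assumes c: "\<And>i. 1 \<le> i \<Longrightarrow> i + 2 \<le> n \<Longrightarrow> b (i+1) - b i \<le> b (i+2) - b (i+1)"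
    and k: "1 \<le> k" "k + 1 \<le> n"
  shows "\<And>i. 1 \<le> i \<Longrightarrow> i + d = k \<Longrightarrow> b k + (real i - real k) * (b (k+1) - b k) \<le> b i"
proof (induction d)
  case 0 then show ?case by simp
next
  case (Suc d)
  have IH: "b k + (real (i+1) - real k) * (b (k+1) - b k) \<le> b (i+1)"
    using Suc.IH[of "i+1"] Suc.prems by simp
  have "b (i+1) - b i \<le> b (k+1) - b k" using dmono'[OF c, where j=i and j'=k] k Suc.prems by simp
  with IH show ?case by (simp add: algebra_simps)
qed

lemma line_below:
  fixes b :: "nat \<Rightarrow> real"
  assumes c: "\<And>i. 1 \<le> i \<Longrightarrow> i + 2 \<le> n \<Longrightarrow> b (i+1) - b i \<le> b (i+2) - b (i+1)"
    and k: "1 \<le> k" "k + 1 \<le> n" and i: "1 \<le> i" "i \<le> n"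
  shows "b k + (real i - real k) * (b (k+1) - b k) \<le> b i"
proof (cases "k \<le> i")
  case True
  then show ?thesis using line_up[OF c k, of "i-k"] i by simp
next
  case False
  then show ?thesis using line_down[OF c k, of i "k-i"] i by simp
qed

lemma chord:
  fixes b :: "nat \<Rightarrow> real"
  assumes c: "\<And>i. 1 \<le> i \<Longrightarrow> i + 2 \<le> n \<Longrightarrow> b (i+1) - b i \<le> b (i+2) - b (i+1)"
    and i: "1 \<le> i" "i \<le> n"
  shows "(real n - 1) * b i \<le> (real i - 1) * b n + (real n - real i) * b 1"
proof (cases "i = 1 \<or> i = n")
  case True then show ?thesis by (auto simp: algebra_simps)
next
  case False
  then have i2: "2 \<le> i" "i + 1 \<le> n" using i by auto
  define D1 where "D1 = b i - b (i-1)"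
  define D2 where "D2 = b (i+1) - b i"
  have h1: "b (i-1) + (1 - real (i-1)) * D1 \<le> b 1"
    using line_below[OF c, where k="i-1" and i=1] i2 unfolding D1_def by simp
  have h2: "b i + (real n - real i) * D2 \<le> b n"
    using line_below[OF c, where k=i and i=n] i2 unfolding D2_def by simp
  have h3: "D1 \<le> D2" using dmono'[OF c, where j="i-1" and j'=i] i2 unfolding D1_def D2_def by simp
  have e1: "b i - b 1 \<le> (real i - 1) * D1"
    using h1 i2 unfolding D1_def by (simp add: algebra_simps of_nat_diff)
  have "(real n - real i) * (b i - b 1) \<le> (real n - real i) * ((real i - 1) * D1)"
    using e1 i2 by (intro mult_left_mono) auto
  also have "\<dots> \<le> (real n - real i) * ((real i - 1) * D2)"
    using h3 i2 by (intro mult_left_mono) auto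
  also have "\<dots> = (real i - 1) * ((real n - real i) * D2)" by simp
  also have "\<dots> \<le> (real i - 1) * (b n - b i)"
    using h2 i2 by (intro mult_left_mono) auto
  finally show ?thesis by (simp add: algebra_simps)
qed

theorem corollary4p4:
  fixes I :: "real set" and \<psi> :: "real \<Rightarrow> real" and n :: nat
    and a p :: "nat \<Rightarrow> real"
  assumes I: "is_interval I"
    and mono: "mono_on I \<psi>" and conv: "convex_on I \<psi>"
    and n: "n \<ge> 2"
    and aI: "\<And>i. 1 \<le> i \<Longrightarrow> i \<le> n \<Longrightarrow> a i \<in> I"
    and aconv: "\<And>i. 1 \<le> i \<Longrightarrow> i + 2 \<le> n \<Longrightarrow> a (i + 1) - a i \<le> a (i + 2) - a (i + 1)"
    and pnn: "\<And>i. 1 \<le> i \<Longrightarrow> i \<le> n \<Longrightarrow> p i \<ge> 0"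
    and Ppos: "(\<Sum>i=1..n. p i) > 0"
    and mean: "(\<Sum>i=1..n. p i * real i) / (\<Sum>i=1..n. p i) < real n"
  defines "m \<equiv> \<lfloor>(\<Sum>i=1..n. p i * real i) / (\<Sum>i=1..n. p i)\<rfloor>"
  shows "Phi n p \<psi> a m (m + 1) \<le> (\<Sum>i=1..n. p i * \<psi> (a i))
       \<and> (\<Sum>i=1..n. p i * \<psi> (a i)) \<le> Phi n p \<psi> a 1 (int n)"
proof -
  define b where "b i = \<psi> (a i)" for i
  have cI: "convex I" using I by (rule is_interval_convex)
  have c: "b (i+1) - b i \<le> b (i+2) - b (i+1)" if "1 \<le> i" "i + 2 \<le> n" for i
  proof -
    have x: "a i \<in> I" "a (i+2) \<in> I" "a (i+1) \<in> I" using aI that by auto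
    define mid where "mid = (1 - 1/2) *\<^sub>R a i + (1/2) *\<^sub>R a (i+2)"
    have midI: "mid \<in> I" unfolding mid_def using convexD_alt[OF cI x(1,2), of "1/2"] by simp
    have "a (i+1) \<le> mid" using aconv[OF that] unfolding mid_def by simp
    then have "\<psi> (a (i+1)) \<le> \<psi> mid" using mono x midI by (auto intro: mono_onD)
    also have "\<psi> mid \<le> (1 - 1/2) * \<psi> (a i) + (1/2) * \<psi> (a (i+2))"
      unfolding mid_def using convex_onD[OF conv, of "1/2"] x by simp
    finally show ?thesis unfolding b_def by simp
  qed
  define P where "P = (\<Sum>i=1..n. p i)"
  define S where "S = (\<Sum>i=1..n. p i * real i)"
  have SP: "S \<ge> P" unfolding S_def P_def
  proof (rule sum_mono)
    fix i assume "i \<in> {1..n}"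
    then have "p i * 1 \<le> p i * real i" using pnn[of i] by (intro mult_left_mono) auto
    then show "p i \<le> p i * real i" by simp
  qed
  have Pp: "P > 0" using Ppos P_def by simp
  have x1: "S / P \<ge> 1" using SP Pp by simp
  have xn: "S / P < real n" using mean unfolding S_def P_def .
  define k where "k = nat m"
  have mk: "m = int k" and k1: "1 \<le> k" and kn: "k + 1 \<le> n"
  proof -
    have "m \<ge> 1" unfolding m_def using x1 unfolding S_def P_def by (simp add: le_floor_iff)
    moreover have "m < int n" unfolding m_def using xn unfolding S_def P_def
      by (simp add: floor_less_iff)
    ultimately show "m = int k" "1 \<le> k" "k + 1 \<le> n" unfolding k_def by auto
  qed
  have SPeq: "S = P * (S / P)" using Pp by simp
  have mle: "real k \<le> S / P" using mk unfolding m_def S_def P_def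
    by (metis of_int_floor_le of_int_of_nat_eq)
  have lower: "Phi n p \<psi> a m (m + 1) \<le> (\<Sum>i=1..n. p i * b i)"
  proof -
    have "Phi n p \<psi> a m (m + 1) = (\<Sum>i=1..n. p i * (b k + (real i - real k) * (b (k+1) - b k)))"
      unfolding Phi_def mk b_def
      by (simp add: nat_add_distrib sum_distrib_right sum_distrib_left sum.distrib[symmetric]
          algebra_simps)
    also have "\<dots> \<le> (\<Sum>i=1..n. p i * b i)"
      by (rule sum_mono, rule mult_left_mono, rule line_below[OF c k1 kn]) (auto intro: pnn)
    finally show ?thesis .
  qed
  have upper: "(\<Sum>i=1..n. p i * b i) \<le> Phi n p \<psi> a 1 (int n)"
  proof -
    have nn: "real n - 1 > 0" using n by simp
    have "(\<Sum>i=1..n. p i * b i) \<le> (\<Sum>i=1..n. p i * (((real i - 1) * b n + (real n - real i) * b 1) / (real n - 1)))"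
    proof (rule sum_mono, rule mult_left_mono)
      fix i assume "i \<in> {1..n}"
      then have "(real n - 1) * b i \<le> (real i - 1) * b n + (real n - real i) * b 1"
        using chord[OF c, where i=i and n=n] by simp
      then show "b i \<le> ((real i - 1) * b n + (real n - real i) * b 1) / (real n - 1)"
        using nn by (simp add: pos_le_divide_eq mult.commute)
    qed (auto intro: pnn)
    also have "\<dots> = Phi n p \<psi> a 1 (int n)"
    proof -
      have "\<And>i. p i * (((real i - 1) * b n + (real n - real i) * b 1) / (real n - 1))
        = (real i - 1) / (real n - 1) * p i * b n + (real n - real i) / (real n - 1) * p i * b 1"
      proof -
        fix i
        have gen: "\<And>(q::real) u v d x y. d \<noteq> 0 \<Longrightarrow> q * ((u * x + v * y) / d) = u / d * q * x + v / d * q * y"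
          by (simp add: field_simps)
        show "p i * (((real i - 1) * b n + (real n - real i) * b 1) / (real n - 1))
        = (real i - 1) / (real n - 1) * p i * b n + (real n - real i) / (real n - 1) * p i * b 1"
          using nn by (intro gen) simp
      qed
      then have "(\<Sum>i=1..n. p i * (((real i - 1) * b n + (real n - real i) * b 1) / (real n - 1)))
        = (\<Sum>i=1..n. (real i - 1) / (real n - 1) * p i) * b n
          + (\<Sum>i=1..n. (real n - real i) / (real n - 1) * p i) * b 1"
        by (simp add: sum_distrib_right sum.distrib)
      then show ?thesis unfolding Phi_def b_def using n by (simp add: of_nat_diff)
    qed
    finally show ?thesis .
  qed
  show ?thesis using lower upper unfolding b_def by simp
qed

end
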